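(* Let $R$ be a ring and $\mathfrak a\in \mathrm{Ass}_l(R)$. Then: (1) The set $\mathrm{Den}_l(R,\mathfrak a)$ is an ordered abelian semigroup under the product $S_1S_2:=\langle S_1,S_2\rangle$ (the multiplicative subsemigroup of $(R,\cdot)$ generated by $S_1$ and $S_2$); that is, for $S_1,S_2,S_3\in \mathrm{Den}_l(R,\mathfrak a)$ we have $S_1S_2\in \mathrm{Den}_l(R,\mathfrak a)$, $S_1S_2=S_2S_1$, and $S_1\subseteq S_2$ implies $S_1S_3\subseteq S_2S_3$. (2) The set $S_{\mathfrak a}(R):=\bigcup_{S\in \mathrm{Den}_l(R,\mathfrak a)}S$ belongs to $\mathrm{Den}_l(R,\mathfrak a)$, and hence is the largest element of $(\mathrm{Den}_l(R,\mathfrak a),\subseteq)$. (3) If $S_i\in \mathrm{Den}_l(R,\mathfrak a)$ for $i\in I$, where $I$ is an arbitrary non-empty set, then $\langle S_i\mid i\in I\rangle:=\bigcup_{\emptyset\neq J\subseteq I,\ |J|<\infty}\prod_{j\in J}S_j$ belongs to $\mathrm{Den}_l(R,\mathfrak a)$ and is the least upper bound of $\{S_i\}_{i\in I}$ in $(\mathrm{Den}_l(R,\mathfrak a),\subseteq)$.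
   Context: Rings are associative with $1$. A multiplicatively closed subset $S$ of a ring $R$ is a subset with $1\in S$, $0\notin S$ and $st\in S$ for all $s,t\in S$. It is a left Ore set if $Sr\cap Rs\neq\emptyset$ for all $r\in R$, $s\in S$. For a left Ore set $S$, $\mathrm{ass}(S):=\{r\in R\mid sr=0 \text{ for some } s\in S\}$ (an ideal of $R$). A left Ore set $S$ is a left denominator set if whenever $rs=0$ with $r\in R$, $s\in S$, there is $t\in S$ with $tr=0$ (equivalently, the left localization $S^{-1}R$ exists). $\mathrm{Den}_l(R)$ is the set of left denominator sets of $R$, $\mathrm{Ass}_l(R):=\{\mathrm{ass}(S)\mid S\in \mathrm{Den}_l(R)\}$, and for an ideal $\mathfrak a\in\mathrm{Ass}_l(R)$, $\mathrm{Den}_l(R,\mathfrak a):=\{S\in \mathrm{Den}_l(R)\mid \mathrm{ass}(S)=\mathfrak a\}$. *)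

theory Defs
  imports Main
begin

definition mult_closed :: "'a::ring_1 set \<Rightarrow> bool" where
  "mult_closed S \<longleftrightarrow> 1 \<in> S \<and> 0 \<notin> S \<and> (\<forall>s\<in>S. \<forall>t\<in>S. s * t \<in> S)"

definition left_ore :: "'a::ring_1 set \<Rightarrow> bool" where
  "left_ore S \<longleftrightarrow> mult_closed S \<and> (\<forall>r. \<forall>s\<in>S. \<exists>s'\<in>S. \<exists>r'. s' * r = r' * s)"

definition ass :: "'a::ring_1 set \<Rightarrow> 'a set" where
  "ass S = {r. \<exists>s\<in>S. s * r = 0}"

definition left_den :: "'a::ring_1 set \<Rightarrow> bool" where
  "left_den S \<longleftrightarrow> left_ore S \<and> (\<forall>r. \<forall>s\<in>S. r * s = 0 \<longrightarrow> (\<exists>t\<in>S. t * r = 0))"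

definition Den_l :: "'a::ring_1 set set" where
  "Den_l = {S. left_den S}"

definition Ass_l :: "'a::ring_1 set set" where
  "Ass_l = ass ` Den_l"

definition Den_l_ass :: "'a::ring_1 set \<Rightarrow> 'a set set" where
  "Den_l_ass \<aa> = {S \<in> Den_l. ass S = \<aa>}"

definition mult_gen :: "'a::ring_1 set \<Rightarrow> 'a set" where
  "mult_gen X = \<Inter>{T. X \<subseteq> T \<and> (\<forall>x\<in>T. \<forall>y\<in>T. x * y \<in> T)}"

definition den_prod :: "'a::ring_1 set \<Rightarrow> 'a set \<Rightarrow> 'a set" where
  "den_prod S1 S2 = mult_gen (S1 \<union> S2)"

text \<open>The product of the family (S j) for j in a finite nonempty J, in the semigroup
  (iterated <_,_>), i.e. the subsemigroup generated by the S j, j in J.\<close>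
definition fam_prod :: "('i \<Rightarrow> 'a::ring_1 set) \<Rightarrow> 'i set \<Rightarrow> 'a set" where
  "fam_prod S J = mult_gen (\<Union>j\<in>J. S j)"

definition fam_gen :: "('i \<Rightarrow> 'a::ring_1 set) \<Rightarrow> 'i set \<Rightarrow> 'a set" where
  "fam_gen S I = (\<Union>J\<in>{J. J \<noteq> {} \<and> J \<subseteq> I \<and> finite J}. fam_prod S J)"

end

theory Submission
  imports Defs
begin

lemma mg_sub: "X \<subseteq> mult_gen X"
  unfolding mult_gen_def by (rule Inter_greatest) simp
lemma mg_closed: "x \<in> mult_gen X \<Longrightarrow> y \<in> mult_gen X \<Longrightarrow> x * y \<in> mult_gen X"
  unfolding mult_gen_def by (auto simp: Inter_iff)
lemma mg_least: "X \<subseteq> T \<Longrightarrow> \<forall>x\<in>T. \<forall>y\<in>T. x * y \<in> T \<Longrightarrow> mult_gen X \<subseteq> T"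
  unfolding mult_gen_def by (rule Inter_lower) simp
lemma mg_mono: "X \<subseteq> Y \<Longrightarrow> mult_gen X \<subseteq> mult_gen Y"
  apply (rule mg_least)
  using mg_sub apply blast
  using mg_closed by blast

lemma mg_induct:
  assumes "g \<in> mult_gen X" "\<And>x. x \<in> X \<Longrightarrow> P x"
    "\<And>x y. x \<in> mult_gen X \<Longrightarrow> y \<in> mult_gen X \<Longrightarrow> P x \<Longrightarrow> P y \<Longrightarrow> P (x * y)"
  shows "P g"
proof -
  have "mult_gen X \<subseteq> {g \<in> mult_gen X. P g}"
  proof (rule mg_least)
    show "X \<subseteq> {g \<in> mult_gen X. P g}" using mg_sub assms(2) by auto
    show "\<forall>x\<in>{g \<in> mult_gen X. P g}. \<forall>y\<in>{g \<in> mult_gen X. P g}. x * y \<in> {g \<in> mult_gen X. P g}"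
      using assms(3) mg_closed by auto
  qed
  thus ?thesis using assms(1) by blast
qed

lemma mg_absorb: "mult_gen (mult_gen A \<union> B) = mult_gen (A \<union> B)"
proof
  show "mult_gen (mult_gen A \<union> B) \<subseteq> mult_gen (A \<union> B)"
  proof (rule mg_least)
    have "mult_gen A \<subseteq> mult_gen (A \<union> B)" by (rule mg_mono) auto
    moreover have "B \<subseteq> mult_gen (A \<union> B)" using mg_sub[of "A \<union> B"] by auto
    ultimately show "mult_gen A \<union> B \<subseteq> mult_gen (A \<union> B)" by auto
    show "\<forall>x\<in>mult_gen (A \<union> B). \<forall>y\<in>mult_gen (A \<union> B). x * y \<in> mult_gen (A \<union> B)"
      using mg_closed by auto
  qed
  show "mult_gen (A \<union> B) \<subseteq> mult_gen (mult_gen A \<union> B)"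
  proof (rule mg_mono)
    show "A \<union> B \<subseteq> mult_gen A \<union> B" using mg_sub[of A] by auto
  qed
qed

lemma ass_step:
  assumes "S \<in> Den_l_ass a" "s \<in> S" "s * y \<in> a"
  shows "y \<in> a"
proof -
  from assms(1) have d: "left_den S" "ass S = a" unfolding Den_l_ass_def Den_l_def by auto
  then have mc: "mult_closed S" unfolding left_den_def left_ore_def by auto
  from assms(3) d obtain t where "t \<in> S" "t * (s * y) = 0" unfolding ass_def by auto
  moreover have "t * s \<in> S" using mc \<open>t \<in> S\<close> assms(2) unfolding mult_closed_def by auto
  ultimately have "(t * s) * y = 0" "t * s \<in> S" by (simp_all add: mult.assoc)
  then show ?thesis using d(2) unfolding ass_def by blast
qed

lemma main:
  assumes F: "F \<subseteq> Den_l_ass a" "F \<noteq> {}"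
  shows "mult_gen (\<Union>F) \<in> Den_l_ass a"
proof -
  let ?G = "mult_gen (\<Union>F)"
  obtain S0 where S0: "S0 \<in> F" using F by auto
  have S0d: "left_den S0" "ass S0 = a" using S0 F unfolding Den_l_ass_def Den_l_def by auto
  have S0mc: "mult_closed S0" using S0d unfolding left_den_def left_ore_def by auto
  have Fd: "\<And>S. S \<in> F \<Longrightarrow> left_den S \<and> ass S = a" using F unfolding Den_l_ass_def Den_l_def by auto
  have sub: "\<And>S. S \<in> F \<Longrightarrow> S \<subseteq> ?G"
    using mg_sub[of "\<Union>F"] by (meson Union_upper subset_trans)
  have step: "\<And>g. g \<in> ?G \<Longrightarrow> \<forall>y. g * y \<in> a \<longrightarrow> y \<in> a"
  proof -
    fix g assume "g \<in> ?G"
    then show "\<forall>y. g * y \<in> a \<longrightarrow> y \<in> a"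
    proof (rule mg_induct)
      fix x assume "x \<in> \<Union>F"
      then obtain S where "S \<in> F" "x \<in> S" by auto
      then have "S \<in> Den_l_ass a" using F(1) by auto
      then show "\<forall>y. x * y \<in> a \<longrightarrow> y \<in> a" using ass_step \<open>x \<in> S\<close> by metis
    next
      fix x y assume hx: "\<forall>y. x * y \<in> a \<longrightarrow> y \<in> a" and hy: "\<forall>ya. y * ya \<in> a \<longrightarrow> ya \<in> a"
      show "\<forall>z. x * y * z \<in> a \<longrightarrow> z \<in> a"
      proof (intro allI impI)
        fix z assume "x * y * z \<in> a"
        then have "x * (y * z) \<in> a" by (simp only: mult.assoc)
        then have "y * z \<in> a" using hx by blast
        then show "z \<in> a" using hy by blast
      qed
    qed
  qed
  have "1 \<in> S0" using S0mc unfolding mult_closed_def by simp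
  then have "0 \<in> {r. \<exists>s\<in>S0. s * r = 0}" by auto
  then have zero_a: "0 \<in> a" using S0d(2) unfolding ass_def by simp
  have assG: "ass ?G = a"
  proof
    show "ass ?G \<subseteq> a"
    proof
      fix r assume "r \<in> ass ?G"
      then obtain g where "g \<in> ?G" "g * r = 0" unfolding ass_def by auto
      then show "r \<in> a" using step zero_a by metis
    qed
    have "S0 \<subseteq> ?G" using S0 by (rule sub)
    then show "a \<subseteq> ass ?G" using S0d(2) unfolding ass_def by auto
  qed
  have one: "1 \<in> ?G" using S0mc sub[OF S0] unfolding mult_closed_def by auto
  have nz: "0 \<notin> ?G"
  proof
    assume "0 \<in> ?G"
    then have "1 \<in> ass ?G" unfolding ass_def by (intro CollectI bexI[of _ 0]) auto
    then have "1 \<in> ass S0" using assG S0d by simp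
    then obtain s where "s \<in> S0" "s * 1 = 0" unfolding ass_def by auto
    then show False using S0mc unfolding mult_closed_def by auto
  qed
  have ore: "\<And>g. g \<in> ?G \<Longrightarrow> \<forall>r. \<exists>g'\<in>?G. \<exists>r'. g' * r = r' * g"
  proof -
    fix g assume "g \<in> ?G"
    then show "\<forall>r. \<exists>g'\<in>?G. \<exists>r'. g' * r = r' * g"
    proof (rule mg_induct)
      fix x assume "x \<in> \<Union>F"
      then obtain S where S: "S \<in> F" "x \<in> S" by auto
      then have "left_ore S" using Fd unfolding left_den_def by auto
      then have "\<forall>r. \<exists>s'\<in>S. \<exists>r'. s' * r = r' * x" using S unfolding left_ore_def by auto
      moreover have "S \<subseteq> ?G" using S(1) by (rule sub)
      ultimately show "\<forall>r. \<exists>g'\<in>?G. \<exists>r'. g' * r = r' * x" by blast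
    next
      fix x y assume xG: "x \<in> ?G" and yG: "y \<in> ?G"
        and IHx: "\<forall>r. \<exists>g'\<in>?G. \<exists>r'. g' * r = r' * x"
        and IHy: "\<forall>r. \<exists>g'\<in>?G. \<exists>r'. g' * r = r' * y"
      show "\<forall>r. \<exists>g'\<in>?G. \<exists>r'. g' * r = r' * (x * y)"
      proof
        fix r
        obtain g2 r2 where g2: "g2 \<in> ?G" "g2 * r = r2 * y" using IHy by blast
        obtain g1 r1 where g1: "g1 \<in> ?G" "g1 * r2 = r1 * x" using IHx by blast
        have "g1 * g2 * r = g1 * (g2 * r)" by (simp add: mult.assoc)
        also have "\<dots> = (g1 * r2) * y" using g2(2) by (simp add: mult.assoc)
        also have "\<dots> = r1 * (x * y)" using g1(2) by (simp add: mult.assoc)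
        finally have "g1 * g2 * r = r1 * (x * y)" .
        moreover have "g1 * g2 \<in> ?G" using g1(1) g2(1) by (rule mg_closed)
        ultimately show "\<exists>g'\<in>?G. \<exists>r'. g' * r = r' * (x * y)" by blast
      qed
    qed
  qed
  have den: "\<And>g. g \<in> ?G \<Longrightarrow> \<forall>r. r * g = 0 \<longrightarrow> (\<exists>t\<in>?G. t * r = 0)"
  proof -
    fix g assume "g \<in> ?G"
    then show "\<forall>r. r * g = 0 \<longrightarrow> (\<exists>t\<in>?G. t * r = 0)"
    proof (rule mg_induct)
      fix x assume "x \<in> \<Union>F"
      then obtain S where S: "S \<in> F" "x \<in> S" by auto
      then have "\<forall>r. \<forall>s\<in>S. r * s = 0 \<longrightarrow> (\<exists>t\<in>S. t * r = 0)" using Fd unfolding left_den_def by blast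
      then have "\<forall>r. r * x = 0 \<longrightarrow> (\<exists>t\<in>S. t * r = 0)" using S(2) by blast
      moreover have "S \<subseteq> ?G" using S(1) by (rule sub)
      ultimately show "\<forall>r. r * x = 0 \<longrightarrow> (\<exists>t\<in>?G. t * r = 0)" by blast
    next
      fix x y assume xG: "x \<in> ?G" and yG: "y \<in> ?G"
        and IHx: "\<forall>r. r * x = 0 \<longrightarrow> (\<exists>t\<in>?G. t * r = 0)"
        and IHy: "\<forall>r. r * y = 0 \<longrightarrow> (\<exists>t\<in>?G. t * r = 0)"
      show "\<forall>r. r * (x * y) = 0 \<longrightarrow> (\<exists>t\<in>?G. t * r = 0)"
      proof (intro allI impI)
        fix r assume "r * (x * y) = 0"
        then have "(r * x) * y = 0" by (simp add: mult.assoc)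
        then obtain t2 where t2: "t2 \<in> ?G" "t2 * (r * x) = 0" using IHy by blast
        then have "(t2 * r) * x = 0" by (simp add: mult.assoc)
        then obtain t1 where t1: "t1 \<in> ?G" "t1 * (t2 * r) = 0" using IHx by blast
        have "t1 * t2 \<in> ?G" using t1(1) t2(1) by (rule mg_closed)
        moreover have "(t1 * t2) * r = 0" using t1 by (simp add: mult.assoc)
        ultimately show "\<exists>t\<in>?G. t * r = 0" by blast
      qed
    qed
  qed
  have "mult_closed ?G" unfolding mult_closed_def using one nz mg_closed by auto
  moreover have "\<forall>r. \<forall>s\<in>?G. \<exists>s'\<in>?G. \<exists>r'. s' * r = r' * s" using ore by simp
  moreover have "\<forall>r. \<forall>s\<in>?G. r * s = 0 \<longrightarrow> (\<exists>t\<in>?G. t * r = 0)" using den by simp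
  ultimately have "left_den ?G"
    unfolding left_den_def left_ore_def by simp
  then show ?thesis using assG unfolding Den_l_ass_def Den_l_def by simp
qed

lemma den_closed: "T \<in> Den_l_ass a \<Longrightarrow> \<forall>x\<in>T. \<forall>y\<in>T. x * y \<in> T"
  unfolding Den_l_ass_def Den_l_def left_den_def left_ore_def mult_closed_def by auto

lemma fam_gen_mem: "J \<noteq> {} \<Longrightarrow> J \<subseteq> I \<Longrightarrow> finite J \<Longrightarrow> x \<in> fam_prod S J \<Longrightarrow> x \<in> fam_gen S I"
  unfolding fam_gen_def by (rule UN_I[of J]) auto

lemma fam_gen_eq:
  assumes "I \<noteq> {}"
  shows "fam_gen S I = mult_gen (\<Union>i\<in>I. S i)"
proof
  show "fam_gen S I \<subseteq> mult_gen (\<Union>i\<in>I. S i)"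
    unfolding fam_gen_def fam_prod_def
  proof (rule UN_least)
    fix J assume "J \<in> {J. J \<noteq> {} \<and> J \<subseteq> I \<and> finite J}"
    then have "J \<subseteq> I" by simp
    then show "mult_gen (\<Union>j\<in>J. S j) \<subseteq> mult_gen (\<Union>i\<in>I. S i)"
      by (intro mg_mono UN_mono) auto
  qed
  show "mult_gen (\<Union>i\<in>I. S i) \<subseteq> fam_gen S I"
  proof (rule mg_least)
    show "(\<Union>i\<in>I. S i) \<subseteq> fam_gen S I"
    proof
      fix x assume "x \<in> (\<Union>i\<in>I. S i)"
      then obtain i where i: "i \<in> I" "x \<in> S i" by auto
      have "S i \<subseteq> mult_gen (\<Union>j\<in>{i}. S j)" using mg_sub[of "\<Union>j\<in>{i}. S j"] by simp
      then have "x \<in> fam_prod S {i}" unfolding fam_prod_def using i(2) by (rule subsetD)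
      then show "x \<in> fam_gen S I" by (rule fam_gen_mem[rotated 3]) (use i in auto)
    qed
    show "\<forall>x\<in>fam_gen S I. \<forall>y\<in>fam_gen S I. x * y \<in> fam_gen S I"
    proof (intro ballI)
      fix x y assume x: "x \<in> fam_gen S I" and y: "y \<in> fam_gen S I"
      from x obtain J1 where J1: "J1 \<noteq> {}" "J1 \<subseteq> I" "finite J1" "x \<in> fam_prod S J1"
        unfolding fam_gen_def by auto
      from y obtain J2 where J2: "J2 \<noteq> {}" "J2 \<subseteq> I" "finite J2" "y \<in> fam_prod S J2"
        unfolding fam_gen_def by auto
      have "fam_prod S J1 \<subseteq> fam_prod S (J1 \<union> J2)" unfolding fam_prod_def
        by (intro mg_mono UN_mono) auto
      then have x': "x \<in> fam_prod S (J1 \<union> J2)" using J1(4) by (rule subsetD)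
      have "fam_prod S J2 \<subseteq> fam_prod S (J1 \<union> J2)" unfolding fam_prod_def
        by (intro mg_mono UN_mono) auto
      then have y': "y \<in> fam_prod S (J1 \<union> J2)" using J2(4) by (rule subsetD)
      have "x * y \<in> fam_prod S (J1 \<union> J2)" using x' y' unfolding fam_prod_def by (rule mg_closed)
      then show "x * y \<in> fam_gen S I" by (rule fam_gen_mem[rotated 3]) (use J1 J2 in auto)
    qed
  qed
qed

theorem theorem2p1:
  fixes \<aa> :: "'a::ring_1 set"
  assumes "\<aa> \<in> Ass_l"
  shows "(\<forall>S1\<in>Den_l_ass \<aa>. \<forall>S2\<in>Den_l_ass \<aa>. \<forall>S3\<in>Den_l_ass \<aa>.
            den_prod S1 S2 \<in> Den_l_ass \<aa>
          \<and> den_prod S1 S2 = den_prod S2 S1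
          \<and> den_prod (den_prod S1 S2) S3 = den_prod S1 (den_prod S2 S3)
          \<and> (S1 \<subseteq> S2 \<longrightarrow> den_prod S1 S3 \<subseteq> den_prod S2 S3))
    \<and> (\<Union>(Den_l_ass \<aa>) \<in> Den_l_ass \<aa> \<and> (\<forall>S\<in>Den_l_ass \<aa>. S \<subseteq> \<Union>(Den_l_ass \<aa>)))
    \<and> (\<forall>(I :: 'i set) (S :: 'i \<Rightarrow> 'a set). I \<noteq> {} \<longrightarrow> (\<forall>i\<in>I. S i \<in> Den_l_ass \<aa>) \<longrightarrow>
          (fam_gen S I \<in> Den_l_ass \<aa>
          \<and> (\<forall>i\<in>I. S i \<subseteq> fam_gen S I)
          \<and> (\<forall>T\<in>Den_l_ass \<aa>. (\<forall>i\<in>I. S i \<subseteq> T) \<longrightarrow> fam_gen S I \<subseteq> T)))"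
proof (intro conjI)
  show "\<forall>S1\<in>Den_l_ass \<aa>. \<forall>S2\<in>Den_l_ass \<aa>. \<forall>S3\<in>Den_l_ass \<aa>.
            den_prod S1 S2 \<in> Den_l_ass \<aa>
          \<and> den_prod S1 S2 = den_prod S2 S1
          \<and> den_prod (den_prod S1 S2) S3 = den_prod S1 (den_prod S2 S3)
          \<and> (S1 \<subseteq> S2 \<longrightarrow> den_prod S1 S3 \<subseteq> den_prod S2 S3)"
  proof (intro ballI conjI impI)
    fix S1 S2 S3 assume h: "S1 \<in> Den_l_ass \<aa>" "S2 \<in> Den_l_ass \<aa>" "S3 \<in> Den_l_ass \<aa>"
    show "den_prod S1 S2 \<in> Den_l_ass \<aa>"
      unfolding den_prod_def using main[of "{S1, S2}" \<aa>] h by simp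
    show "den_prod S1 S2 = den_prod S2 S1" unfolding den_prod_def by (simp add: Un_commute)
    show "den_prod (den_prod S1 S2) S3 = den_prod S1 (den_prod S2 S3)"
    proof -
      have "mult_gen (mult_gen (S1 \<union> S2) \<union> S3) = mult_gen (S1 \<union> S2 \<union> S3)" by (rule mg_absorb)
      moreover have "mult_gen (S1 \<union> mult_gen (S2 \<union> S3)) = mult_gen (mult_gen (S2 \<union> S3) \<union> S1)"
        by (simp only: Un_commute)
      moreover have "\<dots> = mult_gen (S2 \<union> S3 \<union> S1)" by (rule mg_absorb)
      moreover have "S2 \<union> S3 \<union> S1 = S1 \<union> S2 \<union> S3" by blast
      ultimately show ?thesis unfolding den_prod_def by simp
    qed
    assume "S1 \<subseteq> S2"
    then show "den_prod S1 S3 \<subseteq> den_prod S2 S3" unfolding den_prod_def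
      by (intro mg_mono) blast
  qed
  have ne: "Den_l_ass \<aa> \<noteq> {}" using assms unfolding Ass_l_def Den_l_ass_def by auto
  have G: "mult_gen (\<Union>(Den_l_ass \<aa>)) \<in> Den_l_ass \<aa>" using main[OF _ ne] by simp
  then have "mult_gen (\<Union>(Den_l_ass \<aa>)) \<subseteq> \<Union>(Den_l_ass \<aa>)" by blast
  then have "mult_gen (\<Union>(Den_l_ass \<aa>)) = \<Union>(Den_l_ass \<aa>)" using mg_sub by blast
  then show "\<Union>(Den_l_ass \<aa>) \<in> Den_l_ass \<aa>" using G by simp
  show "\<forall>S\<in>Den_l_ass \<aa>. S \<subseteq> \<Union>(Den_l_ass \<aa>)" by blast
  show "\<forall>(I :: 'i set) (S :: 'i \<Rightarrow> 'a set). I \<noteq> {} \<longrightarrow> (\<forall>i\<in>I. S i \<in> Den_l_ass \<aa>) \<longrightarrow>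
          (fam_gen S I \<in> Den_l_ass \<aa>
          \<and> (\<forall>i\<in>I. S i \<subseteq> fam_gen S I)
          \<and> (\<forall>T\<in>Den_l_ass \<aa>. (\<forall>i\<in>I. S i \<subseteq> T) \<longrightarrow> fam_gen S I \<subseteq> T))"
  proof (intro allI impI conjI ballI)
    fix I :: "'i set" and S :: "'i \<Rightarrow> 'a set"
    assume I: "I \<noteq> {}" and S: "\<forall>i\<in>I. S i \<in> Den_l_ass \<aa>"
    have eq: "fam_gen S I = mult_gen (\<Union>(S ` I))" using fam_gen_eq[OF I] .
    show "fam_gen S I \<in> Den_l_ass \<aa>" unfolding eq using main[of "S ` I" \<aa>] I S by auto
    fix i assume "i \<in> I" then show "S i \<subseteq> fam_gen S I" unfolding eq using mg_sub by blast
  next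
    fix I :: "'i set" and S :: "'i \<Rightarrow> 'a set" and T
    assume I: "I \<noteq> {}" and T: "T \<in> Den_l_ass \<aa>" "\<forall>i\<in>I. S i \<subseteq> T"
    show "fam_gen S I \<subseteq> T" unfolding fam_gen_eq[OF I]
      using mg_least[OF _ den_closed[OF T(1)]] T(2) by blast
  qed
qed

end
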